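(* Let $\mathcal U=(V,\tilde V,W,\tilde W,R)$ be a gradient space. Every regular Rellich–Kondrachov cone $\mathcal K\subseteq\mathrm{Sob}(\mathcal U)$ is a Poincaré set, i.e. there is $C>0$ with $\|u\|_V\le C\|g_u\|_W$ for all $u\in\mathcal K$.
   Context: Let $\tilde V,\tilde W$ be vector spaces over $\mathbf R$ or $\mathbf C$. A gradient relation is a set $R\subseteq\tilde V\times\tilde W$ such that (G1) if $(u,g)\in R$ and $(u',g')\in R$ then $(u+u',g+g')\in R$; (G2) if $(u,g)\in R$ and $\alpha>0$ then $(\alpha u,\alpha g)\in R$. A gradient space $\mathcal U=(V,\tilde V,W,\tilde W,R)$ consists of vector spaces $\tilde V,\tilde W$, a gradient relation $R\subseteq\tilde V\times\tilde W$, and linear subspaces $V\subseteq\tilde V$, $W\subseteq\tilde W$ such that: (GS1) $V$ is a reflexive Banach space with norm $\|\cdot\|_V$; (GS2) $W$ is a reflexive and strictly convex Banach space with norm $\|\cdot\|_W$; (GS3) if $(u,g)\in R$ with $u\in V$, $g\in W$, then there exists $g'\in W$ with $(-u,g')\in R$; (GS4) if $u,u_i\in V$ and $g,g_i\in W$ with $(u_i,g_i)\in R$ for $i=1,2,\dots$, $\|u-u_i\|_V\to0$ and $\|g-g_i\|_W\to0$, then $(u,g)\in R$. The Sobolev space of $\mathcal U$ is $\mathrm{Sob}(\mathcal U)=\{u\in V:(u,g)\in R\text{ for some }g\in W\}$. Each $u\in\mathrm{Sob}(\mathcal U)$ has a unique minimal gradient $g_u\in W$: $(u,g_u)\in R$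 and $\|g_u\|_W\le\|g\|_W$ for all $g\in W$ with $(u,g)\in R$. A Poincaré set is a subset $A\subseteq\mathrm{Sob}(\mathcal U)$ for which there is $C>0$ such that $\|u\|_V\le C\|g\|_W$ for all $u\in A$ and all $g\in W$ with $(u,g)\in R$. A cone $\mathcal K\subseteq\mathrm{Sob}(\mathcal U)$ (i.e. $u\in\mathcal K,\alpha>0\Rightarrow\alpha u\in\mathcal K$) is a Rellich–Kondrachov cone if for every sequence $\{u_i\}\subseteq\mathcal K$ such that $\{u_i\}$ is bounded in $V$ and $\{g_{u_i}\}$ is bounded in $W$, there is a subsequence converging in $V$ to an element of $\mathcal K$. It is regular if, for $u\in\mathcal K$, $g_u=0$ implies $u=0$. *)

theory Defs
  imports "HOL-Analysis.Analysis"
begin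

definition norm_on :: "'a::real_vector set \<Rightarrow> ('a \<Rightarrow> real) \<Rightarrow> bool" where
  "norm_on V n \<longleftrightarrow> subspace V \<and>
     (\<forall>x\<in>V. 0 \<le> n x) \<and> (\<forall>x\<in>V. n x = 0 \<longleftrightarrow> x = 0) \<and>
     (\<forall>x\<in>V. \<forall>y\<in>V. n (x + y) \<le> n x + n y) \<and>
     (\<forall>c. \<forall>x\<in>V. n (c *\<^sub>R x) = \<bar>c\<bar> * n x)"

definition banach_on :: "'a::real_vector set \<Rightarrow> ('a \<Rightarrow> real) \<Rightarrow> bool" where
  "banach_on V n \<longleftrightarrow> norm_on V n \<and>
     (\<forall>X. (\<forall>i. X i \<in> V) \<and> (\<forall>e>0. \<exists>N. \<forall>m\<ge>N. \<forall>k\<ge>N. n (X m - X k) < e)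
        \<longrightarrow> (\<exists>x\<in>V. (\<lambda>i. n (X i - x)) \<longlonglongrightarrow> 0))"

text \<open>Continuous linear functionals on (V, n), normalised to vanish outside V.\<close>
definition dual_on :: "'a::real_vector set \<Rightarrow> ('a \<Rightarrow> real) \<Rightarrow> ('a \<Rightarrow> real) set" where
  "dual_on V n = {f. (\<forall>x\<in>V. \<forall>y\<in>V. f (x + y) = f x + f y) \<and>
                     (\<forall>c. \<forall>x\<in>V. f (c *\<^sub>R x) = c * f x) \<and>
                     (\<exists>K. \<forall>x\<in>V. \<bar>f x\<bar> \<le> K * n x) \<and>
                     (\<forall>x. x \<notin> V \<longrightarrow> f x = 0)}"

definition dual_norm :: "'a::real_vector set \<Rightarrow> ('a \<Rightarrow> real) \<Rightarrow> ('a \<Rightarrow> real) \<Rightarrow> real" where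
  "dual_norm V n f = Sup {\<bar>f x\<bar> | x. x \<in> V \<and> n x \<le> 1}"

definition reflexive_on :: "'a::real_vector set \<Rightarrow> ('a \<Rightarrow> real) \<Rightarrow> bool" where
  "reflexive_on V n \<longleftrightarrow>
     (\<forall>\<Phi> :: ('a \<Rightarrow> real) \<Rightarrow> real.
        (\<forall>f\<in>dual_on V n. \<forall>h\<in>dual_on V n. \<Phi> (\<lambda>x. f x + h x) = \<Phi> f + \<Phi> h) \<and>
        (\<forall>c. \<forall>f\<in>dual_on V n. \<Phi> (\<lambda>x. c * f x) = c * \<Phi> f) \<and>
        (\<exists>K. \<forall>f\<in>dual_on V n. \<bar>\<Phi> f\<bar> \<le> K * dual_norm V n f)
      \<longrightarrow> (\<exists>x\<in>V. \<forall>f\<in>dual_on V n. \<Phi> f = f x))"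

definition strictly_convex_on :: "'a::real_vector set \<Rightarrow> ('a \<Rightarrow> real) \<Rightarrow> bool" where
  "strictly_convex_on V n \<longleftrightarrow>
     (\<forall>x\<in>V. \<forall>y\<in>V. n x = 1 \<and> n y = 1 \<and> x \<noteq> y \<longrightarrow> n ((1/2) *\<^sub>R (x + y)) < 1)"

definition gradient_relation :: "('a::real_vector \<times> 'b::real_vector) set \<Rightarrow> bool" where
  "gradient_relation R \<longleftrightarrow>
     (\<forall>u g u' g'. (u, g) \<in> R \<and> (u', g') \<in> R \<longrightarrow> (u + u', g + g') \<in> R) \<and>
     (\<forall>u g \<alpha>. (u, g) \<in> R \<and> \<alpha> > 0 \<longrightarrow> (\<alpha> *\<^sub>R u, \<alpha> *\<^sub>R g) \<in> R)"

text \<open>Gradient space (V, nV) \<subseteq> Vt = UNIV::'a, (W, nW) \<subseteq> Wt = UNIV::'b, relation R.\<close>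
definition gradient_space ::
  "'a::real_vector set \<Rightarrow> ('a \<Rightarrow> real) \<Rightarrow> 'b::real_vector set \<Rightarrow> ('b \<Rightarrow> real)
     \<Rightarrow> ('a \<times> 'b) set \<Rightarrow> bool" where
  "gradient_space V nV W nW R \<longleftrightarrow>
     gradient_relation R \<and>
     banach_on V nV \<and> reflexive_on V nV \<and>
     banach_on W nW \<and> reflexive_on W nW \<and> strictly_convex_on W nW \<and>
     (\<forall>u g. u \<in> V \<and> g \<in> W \<and> (u, g) \<in> R \<longrightarrow> (\<exists>g'\<in>W. (- u, g') \<in> R)) \<and>
     (\<forall>u g us gs. u \<in> V \<and> g \<in> W \<and> (\<forall>i. us i \<in> V \<and> gs i \<in> W \<and> (us i, gs i) \<in> R) \<and>
        (\<lambda>i. nV (u - us i)) \<longlonglongrightarrow> 0 \<and> (\<lambda>i. nW (g - gs i)) \<longlonglongrightarrow> 0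
        \<longrightarrow> (u, g) \<in> R)"

definition Sob :: "'a::real_vector set \<Rightarrow> 'b::real_vector set \<Rightarrow> ('a \<times> 'b) set \<Rightarrow> 'a set" where
  "Sob V W R = {u \<in> V. \<exists>g\<in>W. (u, g) \<in> R}"

text \<open>The minimal gradient g_u (unique in a gradient space).\<close>
definition min_grad :: "'b::real_vector set \<Rightarrow> ('b \<Rightarrow> real) \<Rightarrow> ('a::real_vector \<times> 'b) set \<Rightarrow> 'a \<Rightarrow> 'b" where
  "min_grad W nW R u =
     (THE g. g \<in> W \<and> (u, g) \<in> R \<and> (\<forall>g'\<in>W. (u, g') \<in> R \<longrightarrow> nW g \<le> nW g'))"

definition poincare_set ::
  "'a::real_vector set \<Rightarrow> ('a \<Rightarrow> real) \<Rightarrow> 'b::real_vector set \<Rightarrow> ('b \<Rightarrow> real) \<Rightarrow> ('a \<times> 'b) set \<Rightarrow> 'a set \<Rightarrow> bool" where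
  "poincare_set V nV W nW R A \<longleftrightarrow> A \<subseteq> Sob V W R \<and>
     (\<exists>C>0. \<forall>u\<in>A. \<forall>g\<in>W. (u, g) \<in> R \<longrightarrow> nV u \<le> C * nW g)"

definition cone_in :: "'a::real_vector set \<Rightarrow> 'a set \<Rightarrow> bool" where
  "cone_in S K \<longleftrightarrow> K \<subseteq> S \<and> (\<forall>u\<in>K. \<forall>\<alpha>>0. \<alpha> *\<^sub>R u \<in> K)"

definition RK_cone ::
  "'a::real_vector set \<Rightarrow> ('a \<Rightarrow> real) \<Rightarrow> 'b::real_vector set \<Rightarrow> ('b \<Rightarrow> real) \<Rightarrow> ('a \<times> 'b) set \<Rightarrow> 'a set \<Rightarrow> bool" where
  "RK_cone V nV W nW R K \<longleftrightarrow> cone_in (Sob V W R) K \<and>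
     (\<forall>us :: nat \<Rightarrow> 'a. (\<forall>i. us i \<in> K) \<and> (\<exists>B. \<forall>i. nV (us i) \<le> B) \<and>
           (\<exists>B. \<forall>i. nW (min_grad W nW R (us i)) \<le> B)
        \<longrightarrow> (\<exists>r u. strict_mono r \<and> u \<in> K \<and> (\<lambda>i. nV (us (r i) - u)) \<longlonglongrightarrow> 0))"

definition regular_cone :: "'b::real_vector set \<Rightarrow> ('b \<Rightarrow> real) \<Rightarrow> ('a::real_vector \<times> 'b) set \<Rightarrow> 'a set \<Rightarrow> bool" where
  "regular_cone W nW R K \<longleftrightarrow> (\<forall>u\<in>K. min_grad W nW R u = 0 \<longrightarrow> u = 0)"

end

theory Submission
  imports Defs "HOL-Library.Function_Algebras"
begin


definition sublin :: "'v::real_vector set \<Rightarrow> ('v \<Rightarrow> real) \<Rightarrow> bool" where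
  "sublin S p \<longleftrightarrow> (\<forall>x\<in>S. \<forall>y\<in>S. p (x + y) \<le> p x + p y) \<and> (\<forall>c\<ge>0. \<forall>x\<in>S. p (c *\<^sub>R x) = c * p x)"

definition goodG :: "'v::real_vector set \<Rightarrow> ('v \<Rightarrow> real) \<Rightarrow> ('v \<times> real) set \<Rightarrow> bool" where
  "goodG S p G \<longleftrightarrow> G \<subseteq> S \<times> UNIV \<and> (0,0) \<in> G \<and>
     (\<forall>x a y b. (x,a) \<in> G \<longrightarrow> (y,b) \<in> G \<longrightarrow> (x+y,a+b) \<in> G) \<and>
     (\<forall>x a c. (x,a) \<in> G \<longrightarrow> (c *\<^sub>R x, c*a) \<in> G) \<and>
     (\<forall>x a. (x,a) \<in> G \<longrightarrow> a \<le> p x)"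

lemma sublin_0: assumes "sublin S p" "subspace S" shows "p 0 = 0"
proof -
  have "\<forall>c\<ge>0. \<forall>x\<in>S. p (c *\<^sub>R x) = c * p x" using assms(1) unfolding sublin_def by blast
  then have "p (0 *\<^sub>R 0) = 0 * p 0" using subspace_0[OF assms(2)] by blast
  then show ?thesis by simp
qed

lemma goodG_chain:
  assumes C: "C \<in> chains {G. goodG S p G}" and S: "subspace S" and sl: "sublin S p"
  shows "goodG S p (insert (0,0) (\<Union>C))"
proof -
  have g: "\<And>X. X \<in> C \<Longrightarrow> goodG S p X" using C by (auto simp: chains_def)
  have ch: "\<And>X Y. X \<in> C \<Longrightarrow> Y \<in> C \<Longrightarrow> X \<subseteq> Y \<or> Y \<subseteq> X" using C by (auto simp: chains_def chain_subset_def)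
  show ?thesis unfolding goodG_def
  proof (intro conjI allI impI)
    have gS: "\<And>X x a. X \<in> C \<Longrightarrow> (x,a) \<in> X \<Longrightarrow> x \<in> S" using g unfolding goodG_def by blast
    show "insert (0, 0) (\<Union> C) \<subseteq> S \<times> UNIV" using subspace_0[OF S] by (auto intro: gS)
    show "(0, 0) \<in> insert (0, 0) (\<Union> C)" by simp
  next
    fix x a y b assume xa: "(x, a) \<in> insert (0, 0) (\<Union> C)" and yb: "(y, b) \<in> insert (0, 0) (\<Union> C)"
    show "(x + y, a + b) \<in> insert (0, 0) (\<Union> C)"
    proof (cases "(x,a) = (0,0)")
      case True then show ?thesis using yb by auto
    next
      case False
      then obtain X where X: "X \<in> C" "(x,a) \<in> X" using xa by auto
      show ?thesis
      proof (cases "(y,b) = (0,0)")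
        case True then show ?thesis using xa sublin_0[OF sl S] by auto
      next
        case False
        then obtain Y where Y: "Y \<in> C" "(y,b) \<in> Y" using yb by auto
        from ch[OF X(1) Y(1)] show ?thesis
        proof
          assume "X \<subseteq> Y" then show ?thesis using g[OF Y(1)] X Y unfolding goodG_def by blast
        next
          assume "Y \<subseteq> X" then show ?thesis using g[OF X(1)] X Y unfolding goodG_def by blast
        qed
      qed
    qed
  next
    fix x a c assume xa: "(x, a) \<in> insert (0, 0) (\<Union> C)"
    have gsc: "\<And>X x a c. X \<in> C \<Longrightarrow> (x,a) \<in> X \<Longrightarrow> (c *\<^sub>R x, c*a) \<in> X"
      using g unfolding goodG_def by blast
    from xa show "(c *\<^sub>R x, c * a) \<in> insert (0, 0) (\<Union> C)"
    proof
      assume "(x,a) = (0,0)" then show ?thesis by simp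
    next
      assume "(x,a) \<in> \<Union> C" then show ?thesis using gsc by blast
    qed
  next
    fix x a assume xa: "(x, a) \<in> insert (0, 0) (\<Union> C)"
    have p0: "p 0 \<ge> 0" if "X \<in> C" for X using g[OF that] unfolding goodG_def by blast
    show "a \<le> p x"
    proof (cases "(x,a) = (0,0)")
      case True
      show ?thesis
      proof (cases "C = {}")
        case True then show ?thesis using xa sublin_0[OF sl S] by auto
      next
        case False then show ?thesis using p0 True by auto
      qed
    next
      case False then show ?thesis using xa g unfolding goodG_def by auto
    qed
  qed
qed

lemma goodG_fun:
  assumes "goodG S p G" "sublin S p" "subspace S" "(x,a) \<in> G" "(x,b) \<in> G"
  shows "a = b"
proof -
  have "((-1) *\<^sub>R x, (-1) * b) \<in> G" using assms unfolding goodG_def by blast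
  then have "(x + (-1) *\<^sub>R x, a + (-1) * b) \<in> G" using assms unfolding goodG_def by blast
  then have 1: "a - b \<le> p 0" using assms(1) unfolding goodG_def by auto
  have "((-1) *\<^sub>R x, (-1) * a) \<in> G" using assms unfolding goodG_def by blast
  then have "(x + (-1) *\<^sub>R x, b + (-1) * a) \<in> G" using assms unfolding goodG_def by blast
  then have 2: "b - a \<le> p 0" using assms(1) unfolding goodG_def by auto
  show ?thesis using 1 2 sublin_0[OF assms(2,3)] by simp
qed

lemma goodG_extend:
  assumes G: "goodG S p G" and sl: "sublin S p" and S: "subspace S" and z: "z \<in> S"
  shows "\<exists>G'. goodG S p G' \<and> G \<subseteq> G' \<and> (\<exists>c. (z,c) \<in> G')"
proof -
  have GS: "\<And>x a. (x,a) \<in> G \<Longrightarrow> x \<in> S" using G unfolding goodG_def by auto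
  have Gadd: "\<And>x a y b. (x,a) \<in> G \<Longrightarrow> (y,b) \<in> G \<Longrightarrow> (x+y,a+b) \<in> G" using G unfolding goodG_def by blast
  have Gsc: "\<And>x a c. (x,a) \<in> G \<Longrightarrow> (c *\<^sub>R x, c*a) \<in> G" using G unfolding goodG_def by blast
  have Gp: "\<And>x a. (x,a) \<in> G \<Longrightarrow> a \<le> p x" using G unfolding goodG_def by blast
  have G0: "(0,0) \<in> G" using G unfolding goodG_def by blast
  have padd: "\<And>x y. x \<in> S \<Longrightarrow> y \<in> S \<Longrightarrow> p (x + y) \<le> p x + p y" using sl unfolding sublin_def by blast
  have phom: "\<And>c x. c \<ge> 0 \<Longrightarrow> x \<in> S \<Longrightarrow> p (c *\<^sub>R x) = c * p x" using sl unfolding sublin_def by blast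
  define L where "L = {a - p (x - z) | x a. (x,a) \<in> G}"
  have key: "a - p (x - z) \<le> p (y + z) - b" if "(x,a) \<in> G" "(y,b) \<in> G" for x a y b
  proof -
    have "a + b \<le> p (x + y)" using Gp[OF Gadd[OF that]] .
    also have "x + y = (x - z) + (y + z)" by simp
    also have "p ((x - z) + (y + z)) \<le> p (x - z) + p (y + z)"
      using padd[of "x - z" "y + z"] GS[OF that(1)] GS[OF that(2)] z S by (simp add: subspace_diff subspace_add)
    finally show ?thesis by simp
  qed
  define c where "c = Sup L"
  have Lne: "L \<noteq> {}" using G0 unfolding L_def by blast
  have Lbdd: "bdd_above L" unfolding L_def bdd_above_def using key G0 by blast
  have cL: "a - p (x - z) \<le> c" if "(x,a) \<in> G" for x a
    unfolding c_def using that by (intro cSup_upper Lbdd) (auto simp: L_def)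
  have cU: "c \<le> p (y + z) - b" if "(y,b) \<in> G" for y b
    unfolding c_def using that key by (intro cSup_least Lne) (auto simp: L_def)
  define G' where "G' = {(x + t *\<^sub>R z, a + t * c) | x a t. (x,a) \<in> G}"
  have "goodG S p G'" unfolding goodG_def
  proof (intro conjI allI impI)
    show "G' \<subseteq> S \<times> UNIV" unfolding G'_def using GS z S by (auto intro!: subspace_add subspace_scale)
    show "(0,0) \<in> G'" unfolding G'_def using G0 by force
  next
    fix x a y b assume "(x,a) \<in> G'" "(y,b) \<in> G'"
    then obtain x1 a1 t1 x2 a2 t2 where 1: "(x1,a1) \<in> G" "x = x1 + t1 *\<^sub>R z" "a = a1 + t1 * c"
      and 2: "(x2,a2) \<in> G" "y = x2 + t2 *\<^sub>R z" "b = a2 + t2 * c" unfolding G'_def by blast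
    have "x + y = (x1 + x2) + (t1 + t2) *\<^sub>R z" "a + b = (a1 + a2) + (t1 + t2) * c"
      using 1 2 by (auto simp: algebra_simps)
    then show "(x + y, a + b) \<in> G'" unfolding G'_def using Gadd[OF 1(1) 2(1)] by blast
  next
    fix x a d assume "(x,a) \<in> G'"
    then obtain x1 a1 t1 where 1: "(x1,a1) \<in> G" "x = x1 + t1 *\<^sub>R z" "a = a1 + t1 * c" unfolding G'_def by blast
    have "d *\<^sub>R x = d *\<^sub>R x1 + (d * t1) *\<^sub>R z" "d * a = d * a1 + (d * t1) * c"
      using 1 by (auto simp: algebra_simps)
    then show "(d *\<^sub>R x, d * a) \<in> G'" unfolding G'_def using Gsc[OF 1(1)] by blast
  next
    fix x a assume "(x,a) \<in> G'"
    then obtain x1 a1 t where 1: "(x1,a1) \<in> G" "x = x1 + t *\<^sub>R z" "a = a1 + t * c" unfolding G'_def by blast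
    have x1S: "x1 \<in> S" using GS 1 by blast
    consider "t = 0" | "t > 0" | "t < 0" by linarith
    then show "a \<le> p x"
    proof cases
      case 1 then show ?thesis using Gp \<open>(x1,a1) \<in> G\<close> \<open>x = _\<close> \<open>a = _\<close> by simp
    next
      case 2
      have m: "((1/t) *\<^sub>R x1, (1/t) * a1) \<in> G" using Gsc 1(1) by blast
      have "c \<le> p ((1/t) *\<^sub>R x1 + z) - (1/t) * a1" using cU[OF m] .
      then have "t * c \<le> t * (p ((1/t) *\<^sub>R x1 + z) - (1/t) * a1)" using 2
        by (intro mult_left_mono) auto
      then have "t * c \<le> t * p ((1/t) *\<^sub>R x1 + z) - a1" using 2
        by (simp add: right_diff_distrib)
      also have "t * p ((1/t) *\<^sub>R x1 + z) = p (t *\<^sub>R ((1/t) *\<^sub>R x1 + z))"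
        using phom[of t "(1/t) *\<^sub>R x1 + z"] 2 x1S z S by (simp add: subspace_add subspace_scale)
      also have "t *\<^sub>R ((1/t) *\<^sub>R x1 + z) = x" using 2 1 by (simp add: scaleR_add_right)
      finally show ?thesis using 1 by simp
    next
      case 3
      define s where "s = -t"
      have s: "s > 0" using 3 s_def by simp
      have m: "((1/s) *\<^sub>R x1, (1/s) * a1) \<in> G" using Gsc 1(1) by blast
      have "(1/s) * a1 - p ((1/s) *\<^sub>R x1 - z) \<le> c" using cL[OF m] .
      then have "s * ((1/s) * a1 - p ((1/s) *\<^sub>R x1 - z)) \<le> s * c" using s
        by (intro mult_left_mono) auto
      then have "a1 - s * p ((1/s) *\<^sub>R x1 - z) \<le> s * c" using s
        by (simp add: right_diff_distrib)
      also have "s * p ((1/s) *\<^sub>R x1 - z) = p (s *\<^sub>R ((1/s) *\<^sub>R x1 - z))"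
        using phom[of s "(1/s) *\<^sub>R x1 - z"] s x1S z S by (simp add: subspace_diff subspace_scale)
      also have "s *\<^sub>R ((1/s) *\<^sub>R x1 - z) = x" using s 1 s_def by (simp add: scaleR_diff_right)
      finally show ?thesis using 1 s_def by simp
    qed
  qed
  moreover have "G \<subseteq> G'" unfolding G'_def by force
  moreover have "(z, c) \<in> G'" unfolding G'_def using G0 by force
  ultimately show ?thesis by blast
qed

lemma hahn_banach:
  assumes S: "subspace S" and sl: "sublin S p"
  shows "\<exists>f. (\<forall>x\<in>S. \<forall>y\<in>S. f (x + y) = f x + f y) \<and> (\<forall>c. \<forall>x\<in>S. f (c *\<^sub>R x) = c * f x)
             \<and> (\<forall>x\<in>S. f x \<le> p x)"
proof -
  have "\<forall>C\<in>chains {G. goodG S p G}. \<exists>U\<in>{G. goodG S p G}. \<forall>X\<in>C. X \<subseteq> U"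
  proof
    fix C assume C: "C \<in> chains {G. goodG S p G}"
    show "\<exists>U\<in>{G. goodG S p G}. \<forall>X\<in>C. X \<subseteq> U"
    proof (rule bexI[of _ "insert (0,0) (\<Union>C)"])
      show "\<forall>X\<in>C. X \<subseteq> insert (0,0) (\<Union>C)" by blast
      show "insert (0,0) (\<Union>C) \<in> {G. goodG S p G}" using goodG_chain[OF C S sl] by simp
    qed
  qed
  from Zorn_Lemma2[OF this] obtain M where M: "goodG S p M"
    and max0: "\<forall>X\<in>{G. goodG S p G}. M \<subseteq> X \<longrightarrow> X = M" by blast
  have max: "\<And>X. goodG S p X \<Longrightarrow> M \<subseteq> X \<Longrightarrow> X = M" using max0 by simp
  have dom: "\<exists>a. (z,a) \<in> M" if zS: "z \<in> S" for z
  proof -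
    obtain G' c where "goodG S p G'" "M \<subseteq> G'" "(z,c) \<in> G'" using goodG_extend[OF M sl S zS] by blast
    then have "G' = M" using max by simp
    then have "(z,c) \<in> M" using \<open>(z,c) \<in> G'\<close> by simp
    then show ?thesis by blast
  qed
  define f where "f z = (THE a. (z,a) \<in> M)" for z
  have fM: "(z, f z) \<in> M" if zS: "z \<in> S" for z
  proof -
    obtain a where a: "(z,a) \<in> M" using dom[OF zS] by blast
    have "(THE a. (z,a) \<in> M) = a" by (rule the_equality[where P="\<lambda>b. (z,b) \<in> M", OF a]) (rule goodG_fun[OF M sl S _ a])
    then show ?thesis using a by (simp add: f_def)
  qed
  have feq: "f z = a" if zaM: "(z,a) \<in> M" and zS: "z \<in> S" for z a
    using goodG_fun[OF M sl S fM[OF zS] zaM] .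
  have Madd: "\<And>x a y b. (x,a) \<in> M \<Longrightarrow> (y,b) \<in> M \<Longrightarrow> (x+y,a+b) \<in> M"
    using M unfolding goodG_def by blast
  have Msc: "\<And>x a c. (x,a) \<in> M \<Longrightarrow> (c *\<^sub>R x, c*a) \<in> M"
    using M unfolding goodG_def by blast
  have Mp: "\<And>x a. (x,a) \<in> M \<Longrightarrow> a \<le> p x"
    using M unfolding goodG_def by blast
  show ?thesis
  proof (intro exI[of _ f] conjI ballI allI)
    fix x y assume "x \<in> S" "y \<in> S"
    then have "(x + y, f x + f y) \<in> M" using Madd fM by blast
    moreover have "x + y \<in> S" using \<open>x \<in> S\<close> \<open>y \<in> S\<close> by (rule subspace_add[OF S])
    ultimately show "f (x + y) = f x + f y" using feq by blast
  next
    fix c x assume "x \<in> S"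
    then have "(c *\<^sub>R x, c * f x) \<in> M" using Msc fM by blast
    moreover have "c *\<^sub>R x \<in> S" using \<open>x \<in> S\<close> by (rule subspace_scale[OF S])
    ultimately show "f (c *\<^sub>R x) = c * f x" using feq by blast
  next
    fix x assume "x \<in> S" then show "f x \<le> p x" using fM Mp by blast
  qed
qed




lemma norm_onD:
  assumes "norm_on W n"
  shows "subspace W" "\<And>x. x \<in> W \<Longrightarrow> 0 \<le> n x" "\<And>x. x \<in> W \<Longrightarrow> n x = 0 \<longleftrightarrow> x = 0"
    "\<And>x y. x \<in> W \<Longrightarrow> y \<in> W \<Longrightarrow> n (x + y) \<le> n x + n y"
    "\<And>c x. x \<in> W \<Longrightarrow> n (c *\<^sub>R x) = \<bar>c\<bar> * n x"
  using assms unfolding norm_on_def by auto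

lemma norm_on_0: "norm_on W n \<Longrightarrow> n 0 = 0"
  using norm_onD(3)[of W n 0] norm_onD(1)[of W n] subspace_0 by blast

lemma norm_on_minus: assumes "norm_on W n" "x \<in> W" shows "n (- x) = n x"
  using norm_onD(5)[OF assms(1) assms(2), of "-1"] by simp

lemma norm_on_commute: assumes "norm_on W n" "x \<in> W" "y \<in> W" shows "n (x - y) = n (y - x)"
proof -
  have "x - y = - (y - x)" by simp
  then show ?thesis using norm_on_minus[OF assms(1), of "y - x"] subspace_diff[OF norm_onD(1)[OF assms(1)] assms(3,2)] by simp
qed

lemma norm_on_triangle_diff: assumes "norm_on W n" "x \<in> W" "y \<in> W" "z \<in> W"
  shows "n (x - z) \<le> n (x - y) + n (y - z)"
proof -
  have S: "subspace W" using norm_onD(1)[OF assms(1)] .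
  have "x - z = (x - y) + (y - z)" by simp
  then show ?thesis using norm_onD(4)[OF assms(1), of "x - y" "y - z"] subspace_diff[OF S] assms by simp
qed

lemma separation:
  assumes nW: "norm_on W n" and AW: "A \<subseteq> W"
    and conv: "\<forall>a1\<in>A. \<forall>a2\<in>A. \<forall>t1>0. \<forall>t2>0. (t1/(t1+t2)) *\<^sub>R a1 + (t2/(t1+t2)) *\<^sub>R a2 \<in> A"
    and dA: "\<forall>a\<in>A. \<delta> \<le> n a" and d0: "0 \<le> \<delta>"
  shows "\<exists>f. (\<forall>x\<in>W. \<forall>y\<in>W. f (x + y) = f x + f y) \<and> (\<forall>c. \<forall>x\<in>W. f (c *\<^sub>R x) = c * f x)
           \<and> (\<forall>y\<in>W. \<bar>f y\<bar> \<le> n y) \<and> (\<forall>a\<in>A. \<delta> \<le> f a)"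
proof -
  have S: "subspace W" using norm_onD(1)[OF nW] .
  note nn = norm_onD(2)[OF nW] and ntri = norm_onD(4)[OF nW] and nsc = norm_onD(5)[OF nW]
  have aW: "\<And>a. a \<in> A \<Longrightarrow> a \<in> W" using AW by blast
  have addW: "\<And>x y. x \<in> W \<Longrightarrow> y \<in> W \<Longrightarrow> x + y \<in> W" by (rule subspace_add[OF S])
  have scW: "\<And>c x. x \<in> W \<Longrightarrow> c *\<^sub>R x \<in> W" by (rule subspace_scale[OF S])
  define P where "P y = insert (n y) {n (y + t *\<^sub>R a) - t * \<delta> | t a. t > 0 \<and> a \<in> A}" for y
  define p where "p y = Inf (P y)" for y
  have lowP: "- n y \<le> e" if y: "y \<in> W" and e: "e \<in> P y" for y e
  proof -
    consider "e = n y" | t a where "t > 0" "a \<in> A" "e = n (y + t *\<^sub>R a) - t * \<delta>"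
      using e unfolding P_def by blast
    then show ?thesis
    proof cases
      case 1 then show ?thesis using nn[OF y] by simp
    next
      case 2
      have "n (t *\<^sub>R a) = n ((y + t *\<^sub>R a) + (- y))" by simp
      also have "\<dots> \<le> n (y + t *\<^sub>R a) + n (- y)"
        using ntri[OF addW[OF y scW[OF aW[OF 2(2)]]] subspace_neg[OF S y]] .
      finally have "t * n a \<le> n (y + t *\<^sub>R a) + n y"
        using nsc[OF aW[OF 2(2)], of t] norm_on_minus[OF nW y] 2 by simp
      moreover have "t * \<delta> \<le> t * n a" using dA 2 mult_left_mono[of \<delta> "n a" t] by simp
      ultimately show ?thesis using 2(3) by linarith
    qed
  qed
  have Pne: "P y \<noteq> {}" for y unfolding P_def by blast
  have pP: "p y \<le> e" if "y \<in> W" "e \<in> P y" for y e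
    unfolding p_def using that lowP by (intro cInf_lower) (auto simp: bdd_below_def)
  have pge: "c \<le> p y" if "\<And>e. e \<in> P y \<Longrightarrow> c \<le> e" for y c
    unfolding p_def using that Pne by (intro cInf_greatest) auto
  have sub1: "p (y1 + y2) \<le> e1 + e2" if y: "y1 \<in> W" "y2 \<in> W" and e: "e1 \<in> P y1" "e2 \<in> P y2" for y1 y2 e1 e2
  proof -
    have y12: "y1 + y2 \<in> W" using addW y by blast
    consider "e1 = n y1" | t1 a1 where "t1 > 0" "a1 \<in> A" "e1 = n (y1 + t1 *\<^sub>R a1) - t1 * \<delta>"
      using e(1) unfolding P_def by blast
    then show ?thesis
    proof cases
      case 1
      consider "e2 = n y2" | t2 a2 where "t2 > 0" "a2 \<in> A" "e2 = n (y2 + t2 *\<^sub>R a2) - t2 * \<delta>"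
        using e(2) unfolding P_def by blast
      then show ?thesis
      proof cases
        case 3: 1
        have "p (y1 + y2) \<le> n (y1 + y2)" using pP[OF y12] unfolding P_def by blast
        then show ?thesis using ntri[OF y] 1 3 by simp
      next
        case 3: 2
        have "p (y1 + y2) \<le> n ((y1 + y2) + t2 *\<^sub>R a2) - t2 * \<delta>" using pP[OF y12] 3 unfolding P_def by blast
        also have "(y1 + y2) + t2 *\<^sub>R a2 = y1 + (y2 + t2 *\<^sub>R a2)" by (simp add: algebra_simps)
        also have "n \<dots> \<le> n y1 + n (y2 + t2 *\<^sub>R a2)" using ntri[OF y(1) addW[OF y(2) scW[OF aW[OF 3(2)]]]] .
        finally show ?thesis using 1 3 by simp
      qed
    next
      case 2
      consider "e2 = n y2" | t2 a2 where "t2 > 0" "a2 \<in> A" "e2 = n (y2 + t2 *\<^sub>R a2) - t2 * \<delta>"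
        using e(2) unfolding P_def by blast
      then show ?thesis
      proof cases
        case 3: 1
        have "p (y1 + y2) \<le> n ((y1 + y2) + t1 *\<^sub>R a1) - t1 * \<delta>" using pP[OF y12] 2 unfolding P_def by blast
        also have "(y1 + y2) + t1 *\<^sub>R a1 = (y1 + t1 *\<^sub>R a1) + y2" by (simp add: algebra_simps)
        also have "n \<dots> \<le> n (y1 + t1 *\<^sub>R a1) + n y2" using ntri[OF addW[OF y(1) scW[OF aW[OF 2(2)]]] y(2)] .
        finally show ?thesis using 2 3 by simp
      next
        case 3: 2
        define a where "a = (t1/(t1+t2)) *\<^sub>R a1 + (t2/(t1+t2)) *\<^sub>R a2"
        have aA: "a \<in> A" using conv 2 3 unfolding a_def by blast
        have ta: "(t1 + t2) *\<^sub>R a = t1 *\<^sub>R a1 + t2 *\<^sub>R a2"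
          using 2 3 unfolding a_def by (simp add: scaleR_add_right)
        have tpos: "t1 + t2 > 0" using 2 3 by simp
        have "p (y1 + y2) \<le> n ((y1 + y2) + (t1 + t2) *\<^sub>R a) - (t1 + t2) * \<delta>"
          using pP[OF y12] aA tpos unfolding P_def by blast
        also have "(y1 + y2) + (t1 + t2) *\<^sub>R a = (y1 + t1 *\<^sub>R a1) + (y2 + t2 *\<^sub>R a2)"
          using ta by (simp add: algebra_simps)
        also have "n \<dots> \<le> n (y1 + t1 *\<^sub>R a1) + n (y2 + t2 *\<^sub>R a2)"
          using ntri[OF addW[OF y(1) scW[OF aW[OF 2(2)]]] addW[OF y(2) scW[OF aW[OF 3(2)]]]] .
        finally show ?thesis using 2 3 by (simp add: algebra_simps)
      qed
    qed
  qed
  have subadd: "p (y1 + y2) \<le> p y1 + p y2" if y: "y1 \<in> W" "y2 \<in> W" for y1 y2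
  proof -
    have "p (y1 + y2) - p y1 \<le> e2" if e2: "e2 \<in> P y2" for e2
    proof -
      have "p (y1 + y2) - e2 \<le> p y1" using sub1[OF y _ e2] by (intro pge) (simp add: algebra_simps)
      then show ?thesis by simp
    qed
    then have "p (y1 + y2) - p y1 \<le> p y2" by (intro pge)
    then show ?thesis by simp
  qed
  have p0: "p 0 = 0"
  proof -
    have z: "0 \<in> W" using subspace_0[OF S] .
    have "p 0 \<le> n 0" using pP[OF z] unfolding P_def by blast
    moreover have "0 \<le> p 0" using lowP[OF z] norm_on_0[OF nW] by (intro pge) force
    ultimately show ?thesis using norm_on_0[OF nW] by simp
  qed
  have hom: "p (c *\<^sub>R y) = c * p y" if c: "c \<ge> 0" and y: "y \<in> W" for c y
  proof (cases "c = 0")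
    case True then show ?thesis using p0 by simp
  next
    case False
    then have c: "c > 0" using c by simp
    have cy: "c *\<^sub>R y \<in> W" using scW y by blast
    have m1: "c * e \<in> P (c *\<^sub>R y)" if e: "e \<in> P y" for e
    proof -
      consider "e = n y" | t a where "t > 0" "a \<in> A" "e = n (y + t *\<^sub>R a) - t * \<delta>"
        using e unfolding P_def by blast
      then show ?thesis
      proof cases
        case 1 then show ?thesis using nsc[OF y, of c] c unfolding P_def by simp
      next
        case 2
        have "c *\<^sub>R y + (c * t) *\<^sub>R a = c *\<^sub>R (y + t *\<^sub>R a)" by (simp add: scaleR_add_right)
        then have "n (c *\<^sub>R y + (c * t) *\<^sub>R a) = c * n (y + t *\<^sub>R a)"
          using nsc[OF addW[OF y scW[OF aW[OF 2(2)]]], of c] c by simp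
        then have "c * e = n (c *\<^sub>R y + (c * t) *\<^sub>R a) - (c * t) * \<delta>" using 2(3) by (simp add: right_diff_distrib)
        moreover have "c * t > 0" using c 2 by simp
        ultimately show ?thesis using 2 unfolding P_def by blast
      qed
    qed
    have m2: "e / c \<in> P y" if e: "e \<in> P (c *\<^sub>R y)" for e
    proof -
      consider "e = n (c *\<^sub>R y)" | t a where "t > 0" "a \<in> A" "e = n (c *\<^sub>R y + t *\<^sub>R a) - t * \<delta>"
        using e unfolding P_def by blast
      then show ?thesis
      proof cases
        case 1 then show ?thesis using nsc[OF y, of c] c unfolding P_def by simp
      next
        case 2
        have "c *\<^sub>R y + t *\<^sub>R a = c *\<^sub>R (y + (t / c) *\<^sub>R a)" using c by (simp add: scaleR_add_right)
        then have "n (c *\<^sub>R y + t *\<^sub>R a) = c * n (y + (t / c) *\<^sub>R a)"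
          using nsc[OF addW[OF y scW[OF aW[OF 2(2)]]], of c] c by simp
        then have "e / c = n (y + (t / c) *\<^sub>R a) - (t / c) * \<delta>" using 2 c by (simp add: field_simps)
        moreover have "t / c > 0" using c 2 by simp
        ultimately show ?thesis using 2 unfolding P_def by blast
      qed
    qed
    have "p (c *\<^sub>R y) / c \<le> p y"
    proof (rule pge)
      fix e assume "e \<in> P y"
      then have "p (c *\<^sub>R y) \<le> c * e" using pP[OF cy m1] by blast
      then show "p (c *\<^sub>R y) / c \<le> e" using c by (simp add: divide_le_eq mult.commute)
    qed
    moreover have "c * p y \<le> p (c *\<^sub>R y)"
    proof (rule pge)
      fix e assume "e \<in> P (c *\<^sub>R y)"
      then have "p y \<le> e / c" using pP[OF y m2] by blast
      then show "c * p y \<le> e" using c by (simp add: le_divide_eq mult.commute)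
    qed
    ultimately show ?thesis using c by (simp add: divide_le_eq mult.commute)
  qed
  have "sublin W p" unfolding sublin_def using subadd hom by blast
  from hahn_banach[OF S this] obtain f where
    fadd: "\<forall>x\<in>W. \<forall>y\<in>W. f (x + y) = f x + f y" and fsc: "\<forall>c. \<forall>x\<in>W. f (c *\<^sub>R x) = c * f x"
    and fp: "\<forall>x\<in>W. f x \<le> p x" by blast
  have fn: "f y \<le> n y" if yW: "y \<in> W" for y
  proof -
    have "f y \<le> p y" using fp yW by blast
    moreover have "n y \<in> P y" by (simp add: P_def)
    ultimately show ?thesis using pP[OF yW] by fastforce
  qed
  have fabs: "\<bar>f y\<bar> \<le> n y" if y: "y \<in> W" for y
  proof -
    have "f ((-1) *\<^sub>R y) = (-1) * f y" using fsc y by blast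
    moreover have "f ((-1) *\<^sub>R y) \<le> n ((-1) *\<^sub>R y)" by (rule fn[OF scW[OF y]])
    ultimately show ?thesis using fn[OF y] nsc[OF y, of "-1"] by simp
  qed
  have fA: "\<delta> \<le> f a" if a: "a \<in> A" for a
  proof -
    have aw: "a \<in> W" using aW a .
    have ma: "(-1) *\<^sub>R a \<in> W" by (rule scW[OF aw])
    have "\<exists>t aa. n ((-1) *\<^sub>R a + 1 *\<^sub>R a) - 1 * \<delta> = n ((-1) *\<^sub>R a + t *\<^sub>R aa) - t * \<delta> \<and> t > 0 \<and> aa \<in> A"
      using a by (intro exI[of _ 1] exI[of _ a]) simp
    then have "n ((-1) *\<^sub>R a + 1 *\<^sub>R a) - 1 * \<delta> \<in> P ((-1) *\<^sub>R a)" unfolding P_def by blast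
    then have "p ((-1) *\<^sub>R a) \<le> n ((-1) *\<^sub>R a + 1 *\<^sub>R a) - 1 * \<delta>" by (rule pP[OF ma])
    then have 1: "p ((-1) *\<^sub>R a) \<le> - \<delta>" using norm_on_0[OF nW] by simp
    have 2: "f ((-1) *\<^sub>R a) = (-1) * f a" using fsc aw by blast
    have 3: "f ((-1) *\<^sub>R a) \<le> p ((-1) *\<^sub>R a)" using fp ma by blast
    show ?thesis using 1 2 3 by linarith
  qed
  show ?thesis using fadd fsc fabs fA by blast
qed




instantiation "fun" :: (type, real_vector) real_vector
begin
definition scaleR_fun :: "real \<Rightarrow> ('a \<Rightarrow> 'b) \<Rightarrow> 'a \<Rightarrow> 'b" where
  "scaleR_fun c f = (\<lambda>x. c *\<^sub>R f x)"
instance by standard (auto simp: scaleR_fun_def fun_eq_iff scaleR_add_right scaleR_add_left)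
end

definition tsup :: "(nat \<Rightarrow> real) \<Rightarrow> nat \<Rightarrow> real" where
  "tsup a N = Sup (range (\<lambda>n. a (n + N)))"

definition ls :: "(nat \<Rightarrow> real) \<Rightarrow> real" where
  "ls a = Inf (range (tsup a))"

lemma tsup_upper: assumes "\<forall>n. \<bar>a n\<bar> \<le> B" shows "a (n + N) \<le> tsup a N"
proof -
  have "bdd_above (range (\<lambda>n. a (n + N)))"
  proof (rule bdd_aboveI2)
    fix n show "a (n + N) \<le> B" using spec[OF assms, of "n + N"] by linarith
  qed
  then show ?thesis unfolding tsup_def by (intro cSUP_upper) auto
qed

lemma tsup_least: assumes "\<And>n. a (n + N) \<le> X" shows "tsup a N \<le> X"
  unfolding tsup_def using assms by (intro cSUP_least) auto

lemma tsup_lower: assumes "\<forall>n. \<bar>a n\<bar> \<le> B" shows "- B \<le> tsup a N"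
proof -
  have "- B \<le> a (0 + N)" using spec[OF assms, of "0 + N"] by linarith
  also have "\<dots> \<le> tsup a N" by (rule tsup_upper[OF assms])
  finally show ?thesis .
qed

lemma tsup_mono: assumes "\<forall>n. \<bar>a n\<bar> \<le> B" "N \<le> M" shows "tsup a M \<le> tsup a N"
proof (rule tsup_least)
  fix n
  have "a (n + M) = a ((n + (M - N)) + N)" using assms(2) by simp
  also have "\<dots> \<le> tsup a N" by (rule tsup_upper[OF assms(1)])
  finally show "a (n + M) \<le> tsup a N" .
qed

lemma ls_lower: assumes "\<forall>n. \<bar>a n\<bar> \<le> B" shows "ls a \<le> tsup a N"
proof -
  have "bdd_below (range (tsup a))"
    by (rule bdd_belowI2[where m="-B"]) (rule tsup_lower[OF assms])
  then show ?thesis unfolding ls_def by (intro cINF_lower) auto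
qed

lemma ls_greatest: assumes "\<And>N. X \<le> tsup a N" shows "X \<le> ls a"
  unfolding ls_def using assms by (intro cINF_greatest) auto

lemma ls_le: assumes "\<forall>n. \<bar>a n\<bar> \<le> B" "\<And>n. n \<ge> N \<Longrightarrow> a n \<le> X" shows "ls a \<le> X"
proof -
  have "tsup a N \<le> X" using assms(2) by (intro tsup_least) simp
  then show ?thesis using ls_lower[OF assms(1), of N] by linarith
qed

lemma ls_add:
  assumes a: "\<forall>n. \<bar>a n\<bar> \<le> A" and b: "\<forall>n. \<bar>b n\<bar> \<le> B"
  shows "ls (\<lambda>n. a n + b n) \<le> ls a + ls b"
proof -
  have ab1: "\<bar>a n + b n\<bar> \<le> A + B" for n
    using abs_triangle_ineq[of "a n" "b n"] spec[OF a, of n] spec[OF b, of n] by linarith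
  have ab: "\<forall>n. \<bar>a n + b n\<bar> \<le> A + B" using ab1 by blast
  have step: "ls (\<lambda>n. a n + b n) \<le> tsup a N1 + tsup b N2" for N1 N2
  proof -
    define M where "M = max N1 N2"
    have "ls (\<lambda>n. a n + b n) \<le> tsup (\<lambda>n. a n + b n) M" by (rule ls_lower[OF ab])
    also have "\<dots> \<le> tsup a M + tsup b M"
      by (rule tsup_least) (intro add_mono tsup_upper[OF a] tsup_upper[OF b])
    also have "\<dots> \<le> tsup a N1 + tsup b N2"
      by (intro add_mono tsup_mono[OF a] tsup_mono[OF b]) (auto simp: M_def)
    finally show ?thesis .
  qed
  have "ls (\<lambda>n. a n + b n) - tsup b N2 \<le> ls a" for N2
    using step[of _ N2] by (intro ls_greatest) (simp add: algebra_simps)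
  then have "ls (\<lambda>n. a n + b n) - ls a \<le> ls b"
    by (intro ls_greatest) (simp add: algebra_simps)
  then show ?thesis by simp
qed

lemma ls_scale:
  assumes a: "\<forall>n. \<bar>a n\<bar> \<le> B" and c: "c \<ge> 0"
  shows "ls (\<lambda>n. c * a n) = c * ls a"
proof (cases "c = 0")
  case True
  have "tsup (\<lambda>n. 0) N = 0" for N unfolding tsup_def by simp
  then have "ls (\<lambda>n. 0) = 0" unfolding ls_def by simp
  then show ?thesis using True by simp
next
  case False
  then have c: "c > 0" using c by simp
  have ca: "\<forall>n. \<bar>c * a n\<bar> \<le> c * B" using a c by (simp add: abs_mult mult_left_mono)
  have ts: "tsup (\<lambda>n. c * a n) N = c * tsup a N" for N
  proof (rule antisym)
    show "tsup (\<lambda>n. c * a n) N \<le> c * tsup a N"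
      by (rule tsup_least) (use c tsup_upper[OF a] in \<open>simp add: mult_left_mono\<close>)
    have "tsup a N \<le> tsup (\<lambda>n. c * a n) N / c"
    proof (rule tsup_least)
      fix n
      have "c * a (n + N) \<le> tsup (\<lambda>n. c * a n) N" using tsup_upper[OF ca, of n N] by simp
      then show "a (n + N) \<le> tsup (\<lambda>n. c * a n) N / c" using c by (simp add: le_divide_eq mult.commute)
    qed
    then show "c * tsup a N \<le> tsup (\<lambda>n. c * a n) N" using c by (simp add: le_divide_eq mult.commute)
  qed
  show ?thesis
  proof (rule antisym)
    have "ls (\<lambda>n. c * a n) / c \<le> ls a"
    proof (rule ls_greatest)
      fix N
      have "ls (\<lambda>n. c * a n) \<le> c * tsup a N" using ls_lower[OF ca, of N] ts by simp
      then show "ls (\<lambda>n. c * a n) / c \<le> tsup a N" using c by (simp add: divide_le_eq mult.commute)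
    qed
    then show "ls (\<lambda>n. c * a n) \<le> c * ls a" using c by (simp add: divide_le_eq mult.commute)
    show "c * ls a \<le> ls (\<lambda>n. c * a n)"
    proof (rule ls_greatest)
      fix N
      have "c * ls a \<le> c * tsup a N" using ls_lower[OF a, of N] c by (simp add: mult_left_mono)
      then show "c * ls a \<le> tsup (\<lambda>n. c * a n) N" using ts by simp
    qed
  qed
qed


lemma scaleR_fun_apply [simp]: "(c *\<^sub>R f) x = c *\<^sub>R f x"
  by (simp add: scaleR_fun_def)

lemma dual_onD:
  assumes "h \<in> dual_on W n"
  shows "\<And>x y. x \<in> W \<Longrightarrow> y \<in> W \<Longrightarrow> h (x + y) = h x + h y"
    "\<And>c x. x \<in> W \<Longrightarrow> h (c *\<^sub>R x) = c * h x"
    "\<exists>K. \<forall>x\<in>W. \<bar>h x\<bar> \<le> K * n x"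
    "\<And>x. x \<notin> W \<Longrightarrow> h x = 0"
  using assms unfolding dual_on_def by auto

lemma dual_bound:
  assumes nW: "norm_on W n" and h: "h \<in> dual_on W n" and y: "y \<in> W"
  shows "\<bar>h y\<bar> \<le> dual_norm W n h * n y" "0 \<le> dual_norm W n h"
proof -
  obtain K where K: "\<forall>x\<in>W. \<bar>h x\<bar> \<le> K * n x" using dual_onD(3)[OF h] by blast
  have S: "subspace W" using norm_onD(1)[OF nW] .
  define D where "D = {\<bar>h x\<bar> | x. x \<in> W \<and> n x \<le> 1}"
  have bdd: "bdd_above D"
  proof (rule bdd_aboveI[where M="\<bar>K\<bar>"])
    fix d assume "d \<in> D"
    then obtain x where x: "x \<in> W" "n x \<le> 1" "d = \<bar>h x\<bar>" unfolding D_def by blast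
    have "\<bar>h x\<bar> \<le> K * n x" using K x(1) by blast
    also have "\<dots> \<le> \<bar>K\<bar> * n x" using norm_onD(2)[OF nW x(1)] by (simp add: mult_right_mono)
    also have "\<dots> \<le> \<bar>K\<bar>" using x(2) norm_onD(2)[OF nW x(1)] by (simp add: mult_left_le)
    finally show "d \<le> \<bar>K\<bar>" using x(3) by simp
  qed
  have h0: "h 0 = 0" using dual_onD(2)[OF h subspace_0[OF S], of 0] by simp
  have dn: "dual_norm W n h = Sup D" unfolding dual_norm_def D_def by simp
  have "0 \<in> D" unfolding D_def using h0 subspace_0[OF S] norm_on_0[OF nW] by force
  then show nonneg: "0 \<le> dual_norm W n h" unfolding dn using bdd by (intro cSup_upper)
  show "\<bar>h y\<bar> \<le> dual_norm W n h * n y"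
  proof (cases "n y = 0")
    case True
    then have "y = 0" using norm_onD(3)[OF nW y] by simp
    then show ?thesis using h0 True by simp
  next
    case False
    then have ny: "n y > 0" using norm_onD(2)[OF nW y] by simp
    define x where "x = (1 / n y) *\<^sub>R y"
    have xW: "x \<in> W" unfolding x_def using subspace_scale[OF S y] .
    have nx: "n x = 1" unfolding x_def using norm_onD(5)[OF nW y, of "1 / n y"] ny by simp
    have hx: "h x = h y / n y" unfolding x_def using dual_onD(2)[OF h y, of "1 / n y"] by simp
    have "\<bar>h x\<bar> \<in> D" unfolding D_def using xW nx by force
    then have "\<bar>h x\<bar> \<le> dual_norm W n h" unfolding dn using bdd by (intro cSup_upper)
    then have "\<bar>h y\<bar> / n y \<le> dual_norm W n h" using hx ny by simp
    then show ?thesis using ny by (simp add: divide_le_eq)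
  qed
qed

lemma dual_subspace:
  assumes nW: "norm_on W n"
  shows "subspace (dual_on W n)"
  unfolding subspace_def
proof (intro conjI ballI allI)
  show "0 \<in> dual_on W n" unfolding dual_on_def by (auto intro: exI[of _ 0])
next
  fix f g assume f: "f \<in> dual_on W n" and g: "g \<in> dual_on W n"
  obtain K1 where K1: "\<forall>x\<in>W. \<bar>f x\<bar> \<le> K1 * n x" using dual_onD(3)[OF f] by blast
  obtain K2 where K2: "\<forall>x\<in>W. \<bar>g x\<bar> \<le> K2 * n x" using dual_onD(3)[OF g] by blast
  have bd: "\<forall>x\<in>W. \<bar>(f + g) x\<bar> \<le> (K1 + K2) * n x"
  proof
    fix x assume x: "x \<in> W"
    have "\<bar>f x + g x\<bar> \<le> \<bar>f x\<bar> + \<bar>g x\<bar>" by (rule abs_triangle_ineq)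
    also have "\<dots> \<le> K1 * n x + K2 * n x" using K1 K2 x by (meson add_mono)
    finally show "\<bar>(f + g) x\<bar> \<le> (K1 + K2) * n x" by (simp add: algebra_simps)
  qed
  show "f + g \<in> dual_on W n" unfolding dual_on_def
    using dual_onD(1,2,4)[OF f] dual_onD(1,2,4)[OF g] bd
    by (auto simp: algebra_simps intro!: exI[of _ "K1 + K2"])
next
  fix c and f assume f: "f \<in> dual_on W n"
  obtain K1 where K1: "\<forall>x\<in>W. \<bar>f x\<bar> \<le> K1 * n x" using dual_onD(3)[OF f] by blast
  have bd: "\<forall>x\<in>W. \<bar>(c *\<^sub>R f) x\<bar> \<le> (\<bar>c\<bar> * K1) * n x"
  proof
    fix x assume x: "x \<in> W"
    have "\<bar>c * f x\<bar> = \<bar>c\<bar> * \<bar>f x\<bar>" by (simp add: abs_mult)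
    also have "\<dots> \<le> \<bar>c\<bar> * (K1 * n x)" using K1 x by (simp add: mult_left_mono)
    finally show "\<bar>(c *\<^sub>R f) x\<bar> \<le> (\<bar>c\<bar> * K1) * n x" by (simp add: algebra_simps)
  qed
  show "c *\<^sub>R f \<in> dual_on W n" unfolding dual_on_def
    using dual_onD(1,2,4)[OF f] bd
    by (auto simp: algebra_simps intro!: exI[of _ "\<bar>c\<bar> * K1"])
qed

lemma extend_dual:
  assumes nW: "norm_on W n"
    and fadd: "\<forall>x\<in>W. \<forall>y\<in>W. f (x + y) = f x + f y" and fsc: "\<forall>c. \<forall>x\<in>W. f (c *\<^sub>R x) = c * f x"
    and fb: "\<forall>y\<in>W. \<bar>f y\<bar> \<le> n y"
  shows "(\<lambda>y. if y \<in> W then f y else 0) \<in> dual_on W n"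
proof -
  have S: "subspace W" using norm_onD(1)[OF nW] .
  show ?thesis unfolding dual_on_def
    using fadd fsc fb subspace_add[OF S] subspace_scale[OF S]
    by (auto intro!: exI[of _ 1])
qed

lemma le_of_eps:
  fixes a d :: real
  assumes "\<And>N. a \<le> d + 1 / real (Suc N)"
  shows "a \<le> d"
proof (rule ccontr)
  assume "\<not> a \<le> d"
  then have "0 < a - d" by simp
  then obtain N where N: "N > 0" "inverse (real N) < a - d" using ex_inverse_of_nat_less by blast
  have "1 / real (Suc N) \<le> inverse (real N)" using N(1) by (simp add: frac_le inverse_eq_divide)
  then show False using assms[of N] N(2) by linarith
qed


lemma minimizer_exists:
  fixes W :: "'b::real_vector set"
  assumes ban: "banach_on W n" and refl: "reflexive_on W n" and GW: "G \<subseteq> W" and Gne: "G \<noteq> {}"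
    and conv: "\<forall>g1\<in>G. \<forall>g2\<in>G. \<forall>\<alpha>. 0 < \<alpha> \<and> \<alpha> < 1 \<longrightarrow> \<alpha> *\<^sub>R g1 + (1 - \<alpha>) *\<^sub>R g2 \<in> G"
    and clo: "\<forall>x gs. x \<in> W \<and> (\<forall>i. gs i \<in> G) \<and> (\<lambda>i. n (x - gs i)) \<longlonglongrightarrow> 0 \<longrightarrow> x \<in> G"
  shows "\<exists>x\<in>G. \<forall>g\<in>G. n x \<le> n g"
proof -
  have nW: "norm_on W n" using ban unfolding banach_on_def by blast
  have S: "subspace W" using norm_onD(1)[OF nW] .
  note nn = norm_onD(2)[OF nW]
  have gW: "\<And>g. g \<in> G \<Longrightarrow> g \<in> W" using GW by blast
  define d where "d = Inf (n ` G)"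
  have bddG: "bdd_below (n ` G)"
    by (rule bdd_belowI2[where m=0]) (rule nn[OF gW])
  have dle: "d \<le> n g" if "g \<in> G" for g
    unfolding d_def using bddG that by (intro cInf_lower) auto
  have d0: "0 \<le> d"
    unfolding d_def using Gne nn gW by (intro cInf_greatest) auto
  have "\<exists>g. g \<in> G \<and> n g < d + 1 / real (Suc k)" for k
  proof -
    have "Inf (n ` G) < d + 1 / real (Suc k)" unfolding d_def by simp
    then obtain v where "v \<in> n ` G" "v < d + 1 / real (Suc k)"
      using cInf_less_iff[of "n ` G"] Gne bddG by blast
    then show ?thesis by blast
  qed
  then obtain gs where gs: "\<And>k. gs k \<in> G \<and> n (gs k) < d + 1 / real (Suc k)"
    using choice[of "\<lambda>k g. g \<in> G \<and> n g < d + 1 / real (Suc k)"] by blast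
  define M where "M = d + 1"
  have gsW: "gs k \<in> W" for k using gs gW by blast
  have gsM: "n (gs k) \<le> M" for k
  proof -
    have "1 / real (Suc k) \<le> 1" by simp
    then show ?thesis using gs[of k] unfolding M_def by linarith
  qed
  define D where "D = dual_on W n"
  have seqb: "\<forall>k. \<bar>h (gs k)\<bar> \<le> dual_norm W n h * M" if h: "h \<in> D" for h
  proof
    fix k
    have "\<bar>h (gs k)\<bar> \<le> dual_norm W n h * n (gs k)" using dual_bound(1)[OF nW h[unfolded D_def] gsW] .
    also have "\<dots> \<le> dual_norm W n h * M"
      using gsM dual_bound(2)[OF nW h[unfolded D_def] gsW] by (simp add: mult_left_mono)
    finally show "\<bar>h (gs k)\<bar> \<le> dual_norm W n h * M" .
  qed
  have seqbm: "\<forall>k. \<bar>- h (gs k)\<bar> \<le> dual_norm W n h * M" if h: "h \<in> D" for h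
    using seqb[OF h] by simp
  define p where "p h = ls (\<lambda>k. h (gs k))" for h :: "'b \<Rightarrow> real"
  have DS: "subspace D" unfolding D_def by (rule dual_subspace[OF nW])
  have "sublin D p" unfolding sublin_def
  proof (intro conjI ballI allI impI)
    fix h1 h2 assume h1: "h1 \<in> D" and h2: "h2 \<in> D"
    show "p (h1 + h2) \<le> p h1 + p h2"
      unfolding p_def using ls_add[OF seqb[OF h1] seqb[OF h2]] by simp
  next
    fix c :: real and h assume c: "0 \<le> c" and h: "h \<in> D"
    show "p (c *\<^sub>R h) = c * p h"
      unfolding p_def using ls_scale[OF seqb[OF h] c] by simp
  qed
  from hahn_banach[OF DS this] obtain \<Phi> where
    \<Phi>add: "\<forall>x\<in>D. \<forall>y\<in>D. \<Phi> (x + y) = \<Phi> x + \<Phi> y" and \<Phi>sc: "\<forall>c. \<forall>x\<in>D. \<Phi> (c *\<^sub>R x) = c * \<Phi> x"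
    and \<Phi>p: "\<forall>x\<in>D. \<Phi> x \<le> p x" by blast
  have \<Phi>neg: "\<Phi> ((-1) *\<^sub>R h) = - \<Phi> h" if "h \<in> D" for h
  proof -
    have "\<Phi> ((-1) *\<^sub>R h) = (-1) * \<Phi> h" using \<Phi>sc that by blast
    then show ?thesis by simp
  qed
  have negD: "(-1) *\<^sub>R h \<in> D" if "h \<in> D" for h using subspace_scale[OF DS that] .
  have pneg: "p ((-1) *\<^sub>R h) = ls (\<lambda>k. - h (gs k))" for h unfolding p_def by simp
  have \<Phi>b: "\<bar>\<Phi> h\<bar> \<le> M * dual_norm W n h" if h: "h \<in> D" for h
  proof -
    have "\<Phi> h \<le> p h" using \<Phi>p h by blast
    also have "p h \<le> dual_norm W n h * M" unfolding p_def
      using seqb[OF h] by (intro ls_le[OF seqb[OF h], of 0]) (meson abs_le_D1)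
    finally have 1: "\<Phi> h \<le> dual_norm W n h * M" .
    have "- \<Phi> h \<le> p ((-1) *\<^sub>R h)" using \<Phi>p negD[OF h] \<Phi>neg[OF h] by fastforce
    also have "\<dots> \<le> dual_norm W n h * M" unfolding pneg
      using seqbm[OF h] by (intro ls_le[OF seqbm[OF h], of 0]) (meson abs_le_D1)
    finally have 2: "- \<Phi> h \<le> dual_norm W n h * M" .
    show ?thesis using 1 2 by (simp add: mult.commute abs_le_iff)
  qed
  have "\<exists>x\<in>W. \<forall>f\<in>dual_on W n. \<Phi> f = f x"
  proof -
    have a1: "\<forall>f\<in>dual_on W n. \<forall>h\<in>dual_on W n. \<Phi> (\<lambda>x. f x + h x) = \<Phi> f + \<Phi> h"
    proof (intro ballI)
      fix f h assume "f \<in> dual_on W n" "h \<in> dual_on W n"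
      moreover have "(\<lambda>x. f x + h x) = f + h" by (simp add: plus_fun_def)
      ultimately show "\<Phi> (\<lambda>x. f x + h x) = \<Phi> f + \<Phi> h" using \<Phi>add unfolding D_def by simp
    qed
    have a2: "\<forall>c. \<forall>f\<in>dual_on W n. \<Phi> (\<lambda>x. c * f x) = c * \<Phi> f"
    proof (intro allI ballI)
      fix c f assume "f \<in> dual_on W n"
      moreover have "(\<lambda>x. c * f x) = c *\<^sub>R f" by (simp add: fun_eq_iff)
      ultimately show "\<Phi> (\<lambda>x. c * f x) = c * \<Phi> f" using \<Phi>sc unfolding D_def by simp
    qed
    have a3: "\<exists>K. \<forall>f\<in>dual_on W n. \<bar>\<Phi> f\<bar> \<le> K * dual_norm W n f"
      using \<Phi>b unfolding D_def by blast
    show ?thesis using refl a1 a2 a3 unfolding reflexive_on_def by blast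
  qed
  then obtain x where xW: "x \<in> W" and x\<Phi>: "\<forall>f\<in>D. \<Phi> f = f x" unfolding D_def by blast
  have xG: "x \<in> G"
  proof (rule ccontr)
    assume nxG: "x \<notin> G"
    have "\<exists>k. \<forall>g\<in>G. 1 / real (Suc k) \<le> n (g - x)"
    proof (rule ccontr)
      assume "\<not> (\<exists>k. \<forall>g\<in>G. 1 / real (Suc k) \<le> n (g - x))"
      then have "\<forall>k. \<exists>g. g \<in> G \<and> n (g - x) < 1 / real (Suc k)" by (meson not_le)
      then obtain hs where hs: "\<And>k. hs k \<in> G \<and> n (hs k - x) < 1 / real (Suc k)"
        using choice[of "\<lambda>k g. g \<in> G \<and> n (g - x) < 1 / real (Suc k)"] by blast
      have "(\<lambda>k. n (x - hs k)) \<longlonglongrightarrow> 0"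
      proof (rule LIMSEQ_norm_0)
        fix k
        have hW: "hs k \<in> W" using hs gW by blast
        have "n (x - hs k) = n (hs k - x)" by (rule norm_on_commute[OF nW xW hW])
        moreover have "0 \<le> n (x - hs k)" using nn subspace_diff[OF S xW hW] by blast
        ultimately show "norm (n (x - hs k)) < 1 / real (Suc k)" using hs[of k] by simp
      qed
      then have "x \<in> G" using clo xW hs by blast
      then show False using nxG by simp
    qed
    then obtain k where k: "\<forall>g\<in>G. 1 / real (Suc k) \<le> n (g - x)" by blast
    define \<delta> where "\<delta> = 1 / real (Suc k)"
    have \<delta>0: "\<delta> > 0" unfolding \<delta>_def by simp
    define A where "A = (\<lambda>g. g - x) ` G"
    have AW: "A \<subseteq> W" unfolding A_def using subspace_diff[OF S _ xW] gW by blast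
    have convA: "\<forall>a1\<in>A. \<forall>a2\<in>A. \<forall>t1>0. \<forall>t2>0. (t1/(t1+t2)) *\<^sub>R a1 + (t2/(t1+t2)) *\<^sub>R a2 \<in> A"
    proof (intro ballI allI impI)
      fix a1 a2 and t1 t2 :: real assume a1: "a1 \<in> A" and a2: "a2 \<in> A" and t1: "t1 > 0" and t2: "t2 > 0"
      obtain g1 where g1: "g1 \<in> G" "a1 = g1 - x" using a1 unfolding A_def by blast
      obtain g2 where g2: "g2 \<in> G" "a2 = g2 - x" using a2 unfolding A_def by blast
      define \<alpha> where "\<alpha> = t1 / (t1 + t2)"
      have \<alpha>: "0 < \<alpha>" "\<alpha> < 1" unfolding \<alpha>_def using t1 t2 by auto
      have 1: "t2 / (t1 + t2) = 1 - \<alpha>" unfolding \<alpha>_def using t1 t2 by (simp add: field_simps)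
      have "\<alpha> *\<^sub>R g1 + (1 - \<alpha>) *\<^sub>R g2 \<in> G" using conv g1 g2 \<alpha> by blast
      moreover have "\<alpha> *\<^sub>R (g1 - x) + (1 - \<alpha>) *\<^sub>R (g2 - x) = (\<alpha> *\<^sub>R g1 + (1 - \<alpha>) *\<^sub>R g2) - x"
        by (simp add: scaleR_diff_right scaleR_diff_left algebra_simps)
      ultimately show "(t1/(t1+t2)) *\<^sub>R a1 + (t2/(t1+t2)) *\<^sub>R a2 \<in> A"
        unfolding A_def using g1 g2 1 \<alpha>_def by auto
    qed
    have dA: "\<forall>a\<in>A. \<delta> \<le> n a" unfolding A_def \<delta>_def using k by blast
    obtain f where fadd: "\<forall>x\<in>W. \<forall>y\<in>W. f (x + y) = f x + f y" and fsc: "\<forall>c. \<forall>x\<in>W. f (c *\<^sub>R x) = c * f x"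
      and fb: "\<forall>y\<in>W. \<bar>f y\<bar> \<le> n y" and fA: "\<forall>a\<in>A. \<delta> \<le> f a"
      using separation[OF nW AW convA dA] \<delta>0 by auto
    define fe where "fe = (\<lambda>y. if y \<in> W then f y else 0)"
    have feD: "fe \<in> D" unfolding fe_def D_def by (rule extend_dual[OF nW fadd fsc fb])
    have fex: "fe x = f x" unfolding fe_def using xW by simp
    have fdiff: "f (g - x) = f g - f x" if "g \<in> W" for g
    proof -
      have mx: "(-1) *\<^sub>R x \<in> W" using subspace_scale[OF S xW] .
      have "f (g + (-1) *\<^sub>R x) = f g + f ((-1) *\<^sub>R x)" using fadd that mx by blast
      moreover have "f ((-1) *\<^sub>R x) = (-1) * f x" using fsc xW by blast
      ultimately show ?thesis by simp
    qed
    have big: "f x + \<delta> \<le> fe (gs j)" for j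
    proof -
      have "gs j - x \<in> A" unfolding A_def using gs by blast
      then have "\<delta> \<le> f (gs j - x)" using fA by blast
      then show ?thesis using fdiff[OF gsW[of j]] gsW[of j] unfolding fe_def by simp
    qed
    have "- f x = \<Phi> ((-1) *\<^sub>R fe)" using \<Phi>neg[OF feD] x\<Phi> feD fex by simp
    also have "\<dots> \<le> p ((-1) *\<^sub>R fe)" using \<Phi>p negD[OF feD] by blast
    also have "\<dots> \<le> - (f x + \<delta>)" unfolding pneg
    proof (rule ls_le[OF seqbm[OF feD], of 0])
      fix j :: nat
      show "- fe (gs j) \<le> - (f x + \<delta>)" using big[of j] by linarith
    qed
    finally show False using \<delta>0 by simp
  qed
  have xd: "n x \<le> d"
  proof (cases "x = 0")
    case True then show ?thesis using norm_on_0[OF nW] d0 by simp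
  next
    case False
    have nxp: "0 \<le> n x" using nn[OF xW] .
    have AW: "{x} \<subseteq> W" using xW by simp
    have convA: "\<forall>a1\<in>{x}. \<forall>a2\<in>{x}. \<forall>t1>0. \<forall>t2>0. (t1/(t1+t2)) *\<^sub>R a1 + (t2/(t1+t2)) *\<^sub>R a2 \<in> {x}"
    proof (intro ballI allI impI)
      fix a1 a2 and t1 t2 :: real assume "a1 \<in> {x}" "a2 \<in> {x}" "t1 > 0" "t2 > 0"
      then have "(t1/(t1+t2)) *\<^sub>R a1 + (t2/(t1+t2)) *\<^sub>R a2 = ((t1/(t1+t2)) + (t2/(t1+t2))) *\<^sub>R x"
        by (simp add: scaleR_add_left)
      also have "(t1/(t1+t2)) + (t2/(t1+t2)) = 1" using \<open>t1 > 0\<close> \<open>t2 > 0\<close> by (simp add: add_divide_distrib[symmetric])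
      finally show "(t1/(t1+t2)) *\<^sub>R a1 + (t2/(t1+t2)) *\<^sub>R a2 \<in> {x}" by simp
    qed
    have dA: "\<forall>a\<in>{x}. n x \<le> n a" by simp
    obtain f where fadd: "\<forall>x\<in>W. \<forall>y\<in>W. f (x + y) = f x + f y" and fsc: "\<forall>c. \<forall>x\<in>W. f (c *\<^sub>R x) = c * f x"
      and fb: "\<forall>y\<in>W. \<bar>f y\<bar> \<le> n y" and fA: "\<forall>a\<in>{x}. n x \<le> f a"
      using separation[OF nW AW convA dA nxp] by blast
    define fe where "fe = (\<lambda>y. if y \<in> W then f y else 0)"
    have feD: "fe \<in> D" unfolding fe_def D_def by (rule extend_dual[OF nW fadd fsc fb])
    have fex: "fe x = f x" unfolding fe_def using xW by simp
    show ?thesis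
    proof (rule le_of_eps)
      fix N
      have "n x \<le> f x" using fA by simp
      also have "\<dots> = \<Phi> fe" using x\<Phi> feD fex by simp
      also have "\<dots> \<le> p fe" using \<Phi>p feD by blast
      also have "\<dots> \<le> d + 1 / real (Suc N)" unfolding p_def
      proof (rule ls_le[OF seqb[OF feD], of N])
        fix j assume j: "N \<le> j"
        have "fe (gs j) \<le> n (gs j)" using fb gsW[of j] unfolding fe_def by (simp add: abs_le_D1)
        also have "\<dots> < d + 1 / real (Suc j)" using gs by blast
        also have "\<dots> \<le> d + 1 / real (Suc N)" using j by (simp add: frac_le)
        finally show "fe (gs j) \<le> d + 1 / real (Suc N)" by simp
      qed
      finally show "n x \<le> d + 1 / real (Suc N)" .
    qed
  qed
  show ?thesis using xG xd dle by (meson order_trans)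
qed




lemma gsD:
  assumes "gradient_space V nV W nW R"
  shows "gradient_relation R" "banach_on V nV" "banach_on W nW" "reflexive_on W nW" "strictly_convex_on W nW"
    "\<And>u g us gs. u \<in> V \<Longrightarrow> g \<in> W \<Longrightarrow> (\<forall>i. us i \<in> V \<and> gs i \<in> W \<and> (us i, gs i) \<in> R) \<Longrightarrow>
        (\<lambda>i. nV (u - us i)) \<longlonglongrightarrow> 0 \<Longrightarrow> (\<lambda>i. nW (g - gs i)) \<longlonglongrightarrow> 0 \<Longrightarrow> (u, g) \<in> R"
  using assms unfolding gradient_space_def by blast+

lemma grD:
  assumes "gradient_relation R"
  shows "\<And>u g u' g'. (u, g) \<in> R \<Longrightarrow> (u', g') \<in> R \<Longrightarrow> (u + u', g + g') \<in> R"
    "\<And>u g \<alpha>. (u, g) \<in> R \<Longrightarrow> \<alpha> > 0 \<Longrightarrow> (\<alpha> *\<^sub>R u, \<alpha> *\<^sub>R g) \<in> R"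
  using assms unfolding gradient_relation_def by blast+

definition Pm :: "'b::real_vector set \<Rightarrow> ('b \<Rightarrow> real) \<Rightarrow> ('a::real_vector \<times> 'b) set \<Rightarrow> 'a \<Rightarrow> 'b \<Rightarrow> bool" where
  "Pm W nW R u g \<longleftrightarrow> g \<in> W \<and> (u, g) \<in> R \<and> (\<forall>g'\<in>W. (u, g') \<in> R \<longrightarrow> nW g \<le> nW g')"

lemma conv_R:
  assumes gr: "gradient_relation R" and g1: "(u, g1) \<in> R" and g2: "(u, g2) \<in> R" and a: "0 < \<alpha>" "\<alpha> < 1"
  shows "(u, \<alpha> *\<^sub>R g1 + (1 - \<alpha>) *\<^sub>R g2) \<in> R"
proof -
  have 1: "(\<alpha> *\<^sub>R u, \<alpha> *\<^sub>R g1) \<in> R" using grD(2)[OF gr g1] a by simp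
  have 2: "((1 - \<alpha>) *\<^sub>R u, (1 - \<alpha>) *\<^sub>R g2) \<in> R" using grD(2)[OF gr g2] a by simp
  have "(\<alpha> *\<^sub>R u + (1 - \<alpha>) *\<^sub>R u, \<alpha> *\<^sub>R g1 + (1 - \<alpha>) *\<^sub>R g2) \<in> R" using grD(1)[OF gr 1 2] .
  moreover have "\<alpha> *\<^sub>R u + (1 - \<alpha>) *\<^sub>R u = u" by (simp add: scaleR_add_left[symmetric])
  ultimately show ?thesis by simp
qed

lemma Pm_unique:
  assumes gs: "gradient_space V nV W nW R" and p1: "Pm W nW R u g1" and p2: "Pm W nW R u g2"
  shows "g1 = g2"
proof (rule ccontr)
  assume ne: "g1 \<noteq> g2"
  have gr: "gradient_relation R" using gsD(1)[OF gs] .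
  have nW: "norm_on W nW" using gsD(3)[OF gs] unfolding banach_on_def by blast
  have S: "subspace W" using norm_onD(1)[OF nW] .
  have sc: "strictly_convex_on W nW" using gsD(5)[OF gs] .
  have g1: "g1 \<in> W" "(u, g1) \<in> R" "\<forall>g'\<in>W. (u, g') \<in> R \<longrightarrow> nW g1 \<le> nW g'" using p1 unfolding Pm_def by blast+
  have g2: "g2 \<in> W" "(u, g2) \<in> R" "\<forall>g'\<in>W. (u, g') \<in> R \<longrightarrow> nW g2 \<le> nW g'" using p2 unfolding Pm_def by blast+
  define d where "d = nW g1"
  have d2: "nW g2 = d" using g1 g2 unfolding d_def by (meson antisym)
  define m where "m = (1/2) *\<^sub>R g1 + (1 - 1/2) *\<^sub>R g2"
  have mR: "(u, m) \<in> R" unfolding m_def by (rule conv_R[OF gr g1(2) g2(2)]) auto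
  have mW: "m \<in> W" unfolding m_def using subspace_add[OF S subspace_scale[OF S g1(1)] subspace_scale[OF S g2(1)]] .
  have dm: "d \<le> nW m" using g1(3) mR mW unfolding d_def by blast
  show False
  proof (cases "d = 0")
    case True
    then have "g1 = 0" "g2 = 0" using norm_onD(3)[OF nW g1(1)] norm_onD(3)[OF nW g2(1)] d2 d_def by auto
    then show False using ne by simp
  next
    case False
    then have dpos: "d > 0" using norm_onD(2)[OF nW g1(1)] d_def by simp
    define x1 where "x1 = (1/d) *\<^sub>R g1"
    define x2 where "x2 = (1/d) *\<^sub>R g2"
    have x1W: "x1 \<in> W" unfolding x1_def using subspace_scale[OF S g1(1)] .
    have x2W: "x2 \<in> W" unfolding x2_def using subspace_scale[OF S g2(1)] .
    have n1: "nW x1 = 1" unfolding x1_def using norm_onD(5)[OF nW g1(1), of "1/d"] dpos d_def by simp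
    have n2: "nW x2 = 1" unfolding x2_def using norm_onD(5)[OF nW g2(1), of "1/d"] dpos d2 by simp
    have x12: "x1 \<noteq> x2" unfolding x1_def x2_def using ne dpos by simp
    have lt: "nW ((1/2) *\<^sub>R (x1 + x2)) < 1" using sc x1W x2W n1 n2 x12 unfolding strictly_convex_on_def by blast
    have "m = d *\<^sub>R ((1/2) *\<^sub>R (x1 + x2))" unfolding m_def x1_def x2_def using dpos
      by (simp add: scaleR_add_right)
    moreover have xW: "(1/2) *\<^sub>R (x1 + x2) \<in> W" using subspace_scale[OF S subspace_add[OF S x1W x2W]] .
    ultimately have "nW m = d * nW ((1/2) *\<^sub>R (x1 + x2))" using norm_onD(5)[OF nW xW, of d] dpos by simp
    also have "\<dots> < d" using lt dpos by simp
    finally show False using dm by simp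
  qed
qed

lemma Pm_exists:
  assumes gs: "gradient_space V nV W nW R" and u: "u \<in> Sob V W R"
  shows "\<exists>g. Pm W nW R u g"
proof -
  have gr: "gradient_relation R" using gsD(1)[OF gs] .
  have nW: "norm_on W nW" using gsD(3)[OF gs] unfolding banach_on_def by blast
  have nV: "norm_on V nV" using gsD(2)[OF gs] unfolding banach_on_def by blast
  have S: "subspace W" using norm_onD(1)[OF nW] .
  have uV: "u \<in> V" using u unfolding Sob_def by blast
  define G where "G = {g \<in> W. (u, g) \<in> R}"
  have GW: "G \<subseteq> W" unfolding G_def by blast
  have Gne: "G \<noteq> {}" using u unfolding Sob_def G_def by blast
  have conv: "\<forall>g1\<in>G. \<forall>g2\<in>G. \<forall>\<alpha>. 0 < \<alpha> \<and> \<alpha> < 1 \<longrightarrow> \<alpha> *\<^sub>R g1 + (1 - \<alpha>) *\<^sub>R g2 \<in> G"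
  proof (intro ballI allI impI)
    fix g1 g2 and \<alpha> :: real assume g1: "g1 \<in> G" and g2: "g2 \<in> G" and a: "0 < \<alpha> \<and> \<alpha> < 1"
    have "(u, \<alpha> *\<^sub>R g1 + (1 - \<alpha>) *\<^sub>R g2) \<in> R"
      using conv_R[OF gr _ _ conjunct1[OF a] conjunct2[OF a]] g1 g2 unfolding G_def by blast
    moreover have "\<alpha> *\<^sub>R g1 + (1 - \<alpha>) *\<^sub>R g2 \<in> W"
      using g1 g2 subspace_add[OF S subspace_scale[OF S] subspace_scale[OF S]] unfolding G_def by blast
    ultimately show "\<alpha> *\<^sub>R g1 + (1 - \<alpha>) *\<^sub>R g2 \<in> G" unfolding G_def by blast
  qed
  have clo: "\<forall>x gs. x \<in> W \<and> (\<forall>i. gs i \<in> G) \<and> (\<lambda>i. nW (x - gs i)) \<longlonglongrightarrow> 0 \<longrightarrow> x \<in> G"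
  proof (intro allI impI)
    fix x gs assume a: "x \<in> W \<and> (\<forall>i. gs i \<in> G) \<and> (\<lambda>i. nW (x - gs i)) \<longlonglongrightarrow> 0"
    have b: "\<forall>i. (\<lambda>i. u) i \<in> V \<and> gs i \<in> W \<and> ((\<lambda>i. u) i, gs i) \<in> R" using a uV unfolding G_def by blast
    have c: "(\<lambda>i. nV (u - (\<lambda>i. u) i)) \<longlonglongrightarrow> 0" using norm_on_0[OF nV] by simp
    have "(u, x) \<in> R" using gsD(6)[OF gs uV _ b c] a by blast
    then show "x \<in> G" using a unfolding G_def by blast
  qed
  obtain x where "x \<in> G" "\<forall>g\<in>G. nW x \<le> nW g"
    using minimizer_exists[OF gsD(3)[OF gs] gsD(4)[OF gs] GW Gne conv clo] by blast
  then have "Pm W nW R u x" unfolding Pm_def G_def by blast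
  then show ?thesis by blast
qed

lemma mg_Pm:
  assumes gs: "gradient_space V nV W nW R" and u: "u \<in> Sob V W R"
  shows "Pm W nW R u (min_grad W nW R u)"
proof -
  obtain g where g: "Pm W nW R u g" using Pm_exists[OF gs u] by blast
  have "min_grad W nW R u = (THE g. Pm W nW R u g)" unfolding min_grad_def Pm_def by simp
  also have "\<dots> = g"
    by (rule the_equality[where P="Pm W nW R u", OF g]) (rule Pm_unique[OF gs _ g])
  finally have "min_grad W nW R u = g" .
  then show ?thesis using g by simp
qed

lemma mg_eq:
  assumes gs: "gradient_space V nV W nW R" and u: "u \<in> Sob V W R" and g: "Pm W nW R u g"
  shows "min_grad W nW R u = g"
  using Pm_unique[OF gs mg_Pm[OF gs u] g] .


lemma mg_scale:
  assumes gs: "gradient_space V nV W nW R" and u: "u \<in> Sob V W R" and a: "\<alpha> > 0"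
  shows "\<alpha> *\<^sub>R u \<in> Sob V W R" "min_grad W nW R (\<alpha> *\<^sub>R u) = \<alpha> *\<^sub>R min_grad W nW R u"
proof -
  have gr: "gradient_relation R" using gsD(1)[OF gs] .
  have nW: "norm_on W nW" using gsD(3)[OF gs] unfolding banach_on_def by blast
  have nV: "norm_on V nV" using gsD(2)[OF gs] unfolding banach_on_def by blast
  have S: "subspace W" using norm_onD(1)[OF nW] .
  have SV: "subspace V" using norm_onD(1)[OF nV] .
  define g where "g = min_grad W nW R u"
  have P: "Pm W nW R u g" unfolding g_def by (rule mg_Pm[OF gs u])
  have gW: "g \<in> W" and gR: "(u, g) \<in> R" and gmin: "\<forall>g'\<in>W. (u, g') \<in> R \<longrightarrow> nW g \<le> nW g'"
    using P unfolding Pm_def by blast+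
  have uV: "u \<in> V" using u unfolding Sob_def by blast
  have aR: "(\<alpha> *\<^sub>R u, \<alpha> *\<^sub>R g) \<in> R" using grD(2)[OF gr gR a] .
  have agW: "\<alpha> *\<^sub>R g \<in> W" using subspace_scale[OF S gW] .
  show aS: "\<alpha> *\<^sub>R u \<in> Sob V W R" unfolding Sob_def using subspace_scale[OF SV uV] aR agW by blast
  have "Pm W nW R (\<alpha> *\<^sub>R u) (\<alpha> *\<^sub>R g)" unfolding Pm_def
  proof (intro conjI ballI impI)
    show "\<alpha> *\<^sub>R g \<in> W" by (rule agW)
    show "(\<alpha> *\<^sub>R u, \<alpha> *\<^sub>R g) \<in> R" by (rule aR)
    fix g' assume g'W: "g' \<in> W" and g'R: "(\<alpha> *\<^sub>R u, g') \<in> R"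
    have "((1/\<alpha>) *\<^sub>R (\<alpha> *\<^sub>R u), (1/\<alpha>) *\<^sub>R g') \<in> R" using grD(2)[OF gr g'R, of "1/\<alpha>"] a by simp
    moreover have "(1/\<alpha>) *\<^sub>R (\<alpha> *\<^sub>R u) = u" using a by simp
    ultimately have "(u, (1/\<alpha>) *\<^sub>R g') \<in> R" by simp
    moreover have "(1/\<alpha>) *\<^sub>R g' \<in> W" using subspace_scale[OF S g'W] .
    ultimately have "nW g \<le> nW ((1/\<alpha>) *\<^sub>R g')" using gmin by blast
    also have "\<dots> = nW g' / \<alpha>" using norm_onD(5)[OF nW g'W, of "1/\<alpha>"] a by simp
    finally have "\<alpha> * nW g \<le> nW g'" using a by (simp add: le_divide_eq mult.commute)
    then show "nW (\<alpha> *\<^sub>R g) \<le> nW g'" using norm_onD(5)[OF nW gW, of \<alpha>] a by simp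
  qed
  then show "min_grad W nW R (\<alpha> *\<^sub>R u) = \<alpha> *\<^sub>R min_grad W nW R u"
    using mg_eq[OF gs aS] unfolding g_def by blast
qed

theorem mainTheorem11:
  fixes V :: "'a::real_vector set" and nV :: "'a \<Rightarrow> real"
    and W :: "'b::real_vector set" and nW :: "'b \<Rightarrow> real"
    and R :: "('a \<times> 'b) set" and K :: "'a set"
  assumes "gradient_space V nV W nW R"
    and "RK_cone V nV W nW R K"
    and "regular_cone W nW R K"
  shows "poincare_set V nV W nW R K \<and>
         (\<exists>C>0. \<forall>u\<in>K. nV u \<le> C * nW (min_grad W nW R u))"
proof -
  note gs = assms(1)
  have gr: "gradient_relation R" using gsD(1)[OF gs] .
  have nW: "norm_on W nW" using gsD(3)[OF gs] unfolding banach_on_def by blast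
  have nV: "norm_on V nV" using gsD(2)[OF gs] unfolding banach_on_def by blast
  have S: "subspace W" using norm_onD(1)[OF nW] .
  have cone: "cone_in (Sob V W R) K" using assms(2) unfolding RK_cone_def by blast
  have KS: "K \<subseteq> Sob V W R" using cone unfolding cone_in_def by blast
  have Kc: "\<And>u \<alpha>. u \<in> K \<Longrightarrow> \<alpha> > 0 \<Longrightarrow> \<alpha> *\<^sub>R u \<in> K" using cone unfolding cone_in_def by blast
  have RK0: "\<forall>us :: nat \<Rightarrow> 'a. (\<forall>i. us i \<in> K) \<and> (\<exists>B. \<forall>i. nV (us i) \<le> B) \<and>
           (\<exists>B. \<forall>i. nW (min_grad W nW R (us i)) \<le> B)
        \<longrightarrow> (\<exists>r u. strict_mono r \<and> u \<in> K \<and> (\<lambda>i. nV (us (r i) - u)) \<longlonglongrightarrow> 0)"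
    using assms(2) unfolding RK_cone_def by (rule conjunct2)
  have reg: "\<And>u. u \<in> K \<Longrightarrow> min_grad W nW R u = 0 \<Longrightarrow> u = 0"
    using assms(3) unfolding regular_cone_def by blast
  have KV: "\<And>u. u \<in> K \<Longrightarrow> u \<in> V" using KS unfolding Sob_def by blast
  have mgP: "\<And>u. u \<in> K \<Longrightarrow> Pm W nW R u (min_grad W nW R u)" using mg_Pm[OF gs] KS by blast
  have mgW: "\<And>u. u \<in> K \<Longrightarrow> min_grad W nW R u \<in> W" using mgP unfolding Pm_def by blast
  have main: "\<exists>C>0. \<forall>u\<in>K. nV u \<le> C * nW (min_grad W nW R u)"
  proof (rule ccontr)
    assume "\<not> ?thesis"
    then have "\<forall>C>0. \<exists>u\<in>K. C * nW (min_grad W nW R u) < nV u" by (meson not_le)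
    then have "\<forall>i. \<exists>u. u \<in> K \<and> real (Suc i) * nW (min_grad W nW R u) < nV u"
    proof (intro allI)
      fix i assume H: "\<forall>C>0. \<exists>u\<in>K. C * nW (min_grad W nW R u) < nV u"
      have "real (Suc i) > 0" by simp
      then show "\<exists>u. u \<in> K \<and> real (Suc i) * nW (min_grad W nW R u) < nV u" using H by blast
    qed
    then obtain us where us: "\<And>i. us i \<in> K \<and> real (Suc i) * nW (min_grad W nW R (us i)) < nV (us i)"
      using choice[of "\<lambda>i u. u \<in> K \<and> real (Suc i) * nW (min_grad W nW R u) < nV u"] by blast
    have usK: "us i \<in> K" for i using us by blast
    have pos: "nV (us i) > 0" for i
    proof -
      have "0 \<le> real (Suc i) * nW (min_grad W nW R (us i))" using norm_onD(2)[OF nW mgW[OF usK]] by simp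
      then show ?thesis using us[of i] by linarith
    qed
    define vs where "vs i = (1 / nV (us i)) *\<^sub>R us i" for i
    have vsK: "vs i \<in> K" for i unfolding vs_def using Kc[OF usK] pos by simp
    have nvs: "nV (vs i) = 1" for i unfolding vs_def using norm_onD(5)[OF nV KV[OF usK], of "1 / nV (us i)"] pos[of i] by simp
    have mgvs: "min_grad W nW R (vs i) = (1 / nV (us i)) *\<^sub>R min_grad W nW R (us i)" for i
      unfolding vs_def using mg_scale(2)[OF gs KS[THEN subsetD, OF usK] , of "1 / nV (us i)"] pos[of i] by simp
    have nmg: "nW (min_grad W nW R (vs i)) < 1 / real (Suc i)" for i
    proof -
      have "nW (min_grad W nW R (vs i)) = nW (min_grad W nW R (us i)) / nV (us i)"
        using mgvs[of i] norm_onD(5)[OF nW mgW[OF usK], of "1 / nV (us i)"] pos[of i] by simp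
      also have "\<dots> < 1 / real (Suc i)"
        using us[of i] pos[of i] by (simp add: divide_less_eq field_simps)
      finally show ?thesis .
    qed
    have nmg1: "nW (min_grad W nW R (vs i)) \<le> 1" for i
    proof -
      have "1 / real (Suc i) \<le> 1" by simp
      then show ?thesis using nmg[of i] by linarith
    qed
    have prem: "(\<forall>i. vs i \<in> K) \<and> (\<exists>B. \<forall>i. nV (vs i) \<le> B) \<and> (\<exists>B. \<forall>i. nW (min_grad W nW R (vs i)) \<le> B)"
      using vsK nvs nmg1 by (intro conjI allI exI[of _ 1]) auto
    obtain r v where r: "strict_mono r" and vK: "v \<in> K" and lim: "(\<lambda>i. nV (vs (r i) - v)) \<longlonglongrightarrow> 0"
      using RK0[rule_format, OF prem] by blast
    have vV: "v \<in> V" using KV[OF vK] .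
    have vsV: "vs i \<in> V" for i using KV[OF vsK] .
    have SV: "subspace V" using norm_onD(1)[OF nV] .
    have nv1: "nV v = 1"
    proof -
      have b: "\<bar>1 - nV v\<bar> \<le> nV (vs (r i) - v)" for i
      proof -
        have "nV (vs (r i)) \<le> nV (vs (r i) - v) + nV v"
          using norm_onD(4)[OF nV subspace_diff[OF SV vsV[of "r i"] vV] vV] by simp
        moreover have "nV v \<le> nV (v - vs (r i)) + nV (vs (r i))"
          using norm_onD(4)[OF nV subspace_diff[OF SV vV vsV[of "r i"]] vsV[of "r i"]] by simp
        moreover have "nV (v - vs (r i)) = nV (vs (r i) - v)" by (rule norm_on_commute[OF nV vV vsV[of "r i"]])
        ultimately show ?thesis using nvs[of "r i"] by linarith
      qed
      have "\<bar>1 - nV v\<bar> \<le> 0" using LIMSEQ_le_const[OF lim] b by blast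
      then show ?thesis by simp
    qed
    have v0R: "(v, 0) \<in> R"
    proof (rule gsD(6)[OF gs vV subspace_0[OF S], of "\<lambda>i. vs (r i)" "\<lambda>i. min_grad W nW R (vs (r i))"])
      show "\<forall>i. vs (r i) \<in> V \<and> min_grad W nW R (vs (r i)) \<in> W \<and> (vs (r i), min_grad W nW R (vs (r i))) \<in> R"
        using vsV mgW[OF vsK] mgP[OF vsK] unfolding Pm_def by blast
      show "(\<lambda>i. nV (v - vs (r i))) \<longlonglongrightarrow> 0"
        using lim norm_on_commute[OF nV vV vsV] by simp
      show "(\<lambda>i. nW (0 - min_grad W nW R (vs (r i)))) \<longlonglongrightarrow> 0"
      proof (rule LIMSEQ_norm_0)
        fix i
        have mW: "min_grad W nW R (vs (r i)) \<in> W" using mgW[OF vsK] .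
        have "nW (0 - min_grad W nW R (vs (r i))) = nW (min_grad W nW R (vs (r i)))"
          using norm_on_minus[OF nW mW] by simp
        moreover have "0 \<le> nW (min_grad W nW R (vs (r i)))" using norm_onD(2)[OF nW mW] .
        moreover have "1 / real (Suc (r i)) \<le> 1 / real (Suc i)"
          using seq_suble[OF r, of i] by (simp add: frac_le)
        ultimately show "norm (nW (0 - min_grad W nW R (vs (r i)))) < 1 / real (Suc i)"
          using nmg[of "r i"] by simp
      qed
    qed
    have "Pm W nW R v 0" unfolding Pm_def
      using v0R subspace_0[OF S] norm_on_0[OF nW] norm_onD(2)[OF nW] by simp
    then have "min_grad W nW R v = 0" using mg_eq[OF gs KS[THEN subsetD, OF vK]] by blast
    then have "v = 0" using reg[OF vK] by blast
    then show False using nv1 norm_on_0[OF nV] by simp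
  qed
  then obtain C where C: "C > 0" "\<forall>u\<in>K. nV u \<le> C * nW (min_grad W nW R u)" by blast
  have "poincare_set V nV W nW R K" unfolding poincare_set_def
  proof (intro conjI exI[of _ C] ballI impI)
    show "K \<subseteq> Sob V W R" by (rule KS)
    show "C > 0" by (rule C(1))
    fix u g assume u: "u \<in> K" and g: "g \<in> W" and ug: "(u, g) \<in> R"
    have "nW (min_grad W nW R u) \<le> nW g" using mgP[OF u] g ug unfolding Pm_def by blast
    then have "C * nW (min_grad W nW R u) \<le> C * nW g" using C(1) by (simp add: mult_left_mono)
    then show "nV u \<le> C * nW g" using C(2) u by fastforce
  qed
  then show ?thesis using main by blast
qed


end
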